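(* Let $G$ be a simple complex Lie group with Lie algebra $\mathfrak g$, $\rho\colon G\to\mathrm{GL}(V)$ a faithful irreducible finite-dimensional complex representation with differential $\rho_*$, $T$ a maximal torus of $G$ with Lie algebra $\mathfrak t$. Suppose $g\in T$ and $x\in\mathfrak t$ satisfy $\rho(g)=\rho_*(x)$ in $\mathrm{End}(V)$. Let $e_1,\dots,e_n$ be a basis of $V$ of $T$-weight vectors with characters $\chi_1,\dots,\chi_n\in X^*(T)$. If $\chi_i,\chi_j,\chi_k$ are among these characters and $\chi_i\chi_k=\chi_j^2$, then $\chi_i(g)=\chi_j(g)=\chi_k(g)$.
   Context: Each character $\chi\in X^*(T)$ is identified with the linear form $t^*\in\mathfrak t^*$ satisfying $\chi(\exp(y))=\exp(t^*(y))$ for all $y\in\mathfrak t$; $t^*_l$ denotes the form corresponding to $\chi_l$, so that $\rho_*(x)e_l=t^*_l(x)e_l$. *)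

theory Defs
  imports "HOL-Analysis.Analysis"
begin

text \<open>Concrete model of a rank-r complex torus T = (C^*)^r with Lie algebra t = C^r.
  The rank is the cardinality of the finite index type 'r.\<close>

definition torus :: "(complex ^ 'r) set" where
  "torus = {t. \<forall>s. t $ s \<noteq> 0}"

definition texp :: "complex ^ 'r \<Rightarrow> complex ^ 'r" where
  "texp y = (\<chi> s. exp (y $ s))"

text \<open>The character of T with exponent vector m in X^*(T) = Z^r.\<close>
definition character :: "int ^ 'r \<Rightarrow> complex ^ 'r \<Rightarrow> complex" where
  "character m t = (\<Prod>s\<in>UNIV. (t $ s) powi (m $ s))"

text \<open>The linear form t^* on t identified with the character m:
  character m (texp y) = exp (lieform m y).\<close>
definition lieform :: "int ^ 'r \<Rightarrow> complex ^ 'r \<Rightarrow> complex" where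
  "lieform m y = (\<Sum>s\<in>UNIV. of_int (m $ s) * y $ s)"

end

theory Submission
  imports Defs
begin

lemma char_two:
  fixes m :: "int ^ 'r" and s :: 'r
  shows "character m (\<chi> u. if u = s then (2::complex) else 1) = of_real ((2::real) powi (m $ s))"
proof -
  have "character m (\<chi> u. if u = s then (2::complex) else 1)
      = (\<Prod>u\<in>UNIV. (if u = s then (2::complex) else 1) powi (m $ u))"
    unfolding character_def by simp
  also have "\<dots> = (\<Prod>u\<in>UNIV. if u = s then (2::complex) powi (m $ s) else 1)"
    by (rule prod.cong) auto
  also have "\<dots> = (2::complex) powi (m $ s)" by (simp add: prod.delta)
  finally show ?thesis by (simp add: of_real_power_int)
qed

lemma powi2_inj:
  assumes "(2::real) powi a = 2 powi b" shows "a = b"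
proof -
  have "(2::real) powr real_of_int a = 2 powr real_of_int b"
    using assms by (simp add: powr_real_of_int')
  then have "real_of_int a = real_of_int b"
    by (simp add: powr_inj)
  then show ?thesis by simp
qed

lemma exps:
  fixes a b c :: "int ^ 'r"
  assumes rel: "\<And>t. t \<in> torus \<Longrightarrow> character a t * character c t = (character b t)\<^sup>2"
  shows "a $ s + c $ s = 2 * b $ s"
proof -
  let ?t = "(\<chi> u. if u = s then (2::complex) else 1) :: complex ^ 'r"
  have "?t \<in> torus" unfolding torus_def by simp
  from rel[OF this] have "of_real ((2::real) powi (a $ s)) * of_real ((2::real) powi (c $ s))
      = ((of_real ((2::real) powi (b $ s)))\<^sup>2 :: complex)"
    by (simp only: char_two)
  then have h: "(2::real) powi (a $ s) * 2 powi (c $ s) = (2 powi (b $ s))\<^sup>2"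
    by (metis of_real_eq_iff of_real_mult of_real_power)
  then have "(2::real) powi (a $ s + c $ s) = 2 powi (2 * b $ s)"
  proof -
    have e1: "(2::real) powi (a $ s + c $ s) = 2 powi (a $ s) * 2 powi (c $ s)"
      by (rule power_int_add) simp
    have e2: "(2::real) powi (2 * b $ s) = 2 powi (b $ s + b $ s)" by (simp only: mult_2)
    have e3: "(2::real) powi (b $ s + b $ s) = (2 powi (b $ s))\<^sup>2"
      unfolding power2_eq_square by (rule power_int_add) simp
    show ?thesis using e1 e2 e3 h by simp
  qed
  then show ?thesis by (rule powi2_inj)
qed

lemma scal_cancel:
  fixes v :: "complex ^ 'n"
  assumes "p *s v = q *s v" "v \<noteq> 0" shows "p = q"
proof -
  obtain l where "v $ l \<noteq> 0" using assms(2) by (metis vec_eq_iff zero_index)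
  moreover have "p * v $ l = q * v $ l" using assms(1) by (metis vector_smult_component)
  ultimately show ?thesis by simp
qed

theorem lemma2:
  fixes rho :: "complex ^ 'r \<Rightarrow> complex ^ 'n ^ 'n"
    and drho :: "complex ^ 'r \<Rightarrow> complex ^ 'n ^ 'n"
    and E :: "complex ^ 'n ^ 'n"
    and w :: "'n \<Rightarrow> int ^ 'r"
    and g x :: "complex ^ 'r"
    and i j k :: 'n
  assumes basis: "invertible E"
    and rho_hom: "\<And>t t'. t \<in> torus \<Longrightarrow> t' \<in> torus \<Longrightarrow> rho (t * t') = rho t ** rho t'"
    and rho_weight: "\<And>t l. t \<in> torus \<Longrightarrow>
                        rho t *v column l E = character (w l) t *s column l E"
    and drho_lin: "\<And>y z. drho (y + z) = drho y + drho z"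
    and drho_weight: "\<And>y l. drho y *v column l E = lieform (w l) y *s column l E"
    and g: "g \<in> torus"
    and eq: "rho g = drho x"
    and rel: "\<And>t. t \<in> torus \<Longrightarrow>
                 character (w i) t * character (w k) t = (character (w j) t)\<^sup>2"
  shows "character (w i) g = character (w j) g \<and> character (w j) g = character (w k) g"
proof -
  have col: "column l E \<noteq> 0" for l
  proof
    assume "column l E = 0"
    moreover have "E *v axis l 1 = column l E"
      by (simp add: vec_eq_iff matrix_vector_mult_def axis_def column_def if_distrib cong: if_cong)
    ultimately have "E *v axis l 1 = 0" by simp
    moreover obtain B where "B ** E = mat 1" using basis unfolding invertible_def by blast
    ultimately have "(B ** E) *v axis l (1::complex) = 0"
      by (metis matrix_vector_mul_assoc matrix_vector_mult_0_right)
    then show False using \<open>B ** E = mat 1\<close> by (simp add: axis_eq_0_iff)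
  qed
  have cl: "character (w l) g = lieform (w l) x" for l
    using rho_weight[OF g, of l] drho_weight[of x l] eq col[of l]
    by (metis scal_cancel)
  have lin: "lieform (w i) x + lieform (w k) x = 2 * lieform (w j) x"
  proof -
    have "lieform (w i) x + lieform (w k) x
        = (\<Sum>s\<in>UNIV. of_int (w i $ s + w k $ s) * x $ s)"
      unfolding lieform_def by (simp add: sum.distrib[symmetric] distrib_right)
    also have "\<dots> = (\<Sum>s\<in>UNIV. 2 * (of_int (w j $ s) * x $ s))"
      using exps[OF rel] by (simp add: mult.assoc)
    also have "\<dots> = 2 * lieform (w j) x" unfolding lieform_def by (simp add: sum_distrib_left)
    finally show ?thesis .
  qed
  define a where "a = character (w i) g"
  define b where "b = character (w j) g"
  define c where "c = character (w k) g"
  have s: "a + c = 2 * b" using lin cl unfolding a_def b_def c_def by simp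
  have p: "a * c = b\<^sup>2" using rel[OF g] unfolding a_def b_def c_def by simp
  have "(a - b)\<^sup>2 = 0"
  proof -
    have "(a - b)\<^sup>2 = a*a - a*(2*b) + b\<^sup>2" by (simp add: power2_eq_square algebra_simps)
    also have "\<dots> = a*a - a*(a+c) + a*c" by (simp only: s p)
    also have "\<dots> = 0" by (simp add: algebra_simps)
    finally show ?thesis .
  qed
  then have "a = b" by simp
  then have "c = b" using s by simp
  then show ?thesis using \<open>a = b\<close> unfolding a_def b_def c_def by simp
qed

end
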